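(* Let $M\models\mathrm{AA}$ be extremally $\aleph_0$-saturated. If $x\in M$ is normal and $y\in M$, then there is at most one pair $(u,v)\in M^2$ with $y=xu+v$ and $v+1\le x$. Moreover, writing, for normal $x$ and arbitrary $y$, $y=x\cdot f(x,y)+g(x,y)$ with $g(x,y)+1\le x$, the functions $f$ and $g$ are definable on the set $\{(x,y)\in M^2: |x|=1\}$.
   Context: Structures are complete metric spaces of diameter at most $1$ in the language $L=\{+,\cdot,\wedge,\vee,0,1\}$ (operations $1$-Lipschitz, $d$ the only relation symbol). Affine formulas are built from $1$ and atomic formulas $d(t_1,t_2)$ using $+$, scalar multiplication by reals, $\sup_x$, $\inf_x$. $\mathrm{AA}$ is the set of all closed affine conditions true in every model of first-order Peano arithmetic (formulated in $L$ with lattice operations min/max and discrete metric). $|x|=d(x,0)$; $x$ is normal if $|x|=1$; $x\le y$ means $x\wedge y=x$. A model $M$ is extremally $\aleph_0$-saturated if for every finite $A\subseteq M$ every extreme type over $A$ (an extreme point of the compact convex set of positive linear functionals $p$ with $p(1)=1$ on affine formulas in one variable with parameters from $A$, modulo the theory of $(M,a)_{a\in A}$) is realized in $M$. For a definable set $E\subseteq M^2$ (here $E=\{(x,y):|x|=1\}$), a function $h:E\to M$ is definable if $(x,y,z)\mapsto d(h(x,y),z)$ is a uniform limit on $E\times M$ of interpretations of affine formulas with parameters from $M$. *)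

theory Defs
  imports Main "HOL-Analysis.Analysis"
begin

record 'a lstr =
  Mcar  :: "'a set"
  Md    :: "'a \<Rightarrow> 'a \<Rightarrow> real"
  Madd  :: "'a \<Rightarrow> 'a \<Rightarrow> 'a"
  Mmul  :: "'a \<Rightarrow> 'a \<Rightarrow> 'a"
  Mmeet :: "'a \<Rightarrow> 'a \<Rightarrow> 'a"
  Mjoin :: "'a \<Rightarrow> 'a \<Rightarrow> 'a"
  Mzero :: 'a
  Mone  :: 'a

definition lip2 :: "'a lstr \<Rightarrow> ('a \<Rightarrow> 'a \<Rightarrow> 'a) \<Rightarrow> bool" where
  "lip2 S f \<longleftrightarrow> (\<forall>x\<in>Mcar S. \<forall>y\<in>Mcar S. f x y \<in> Mcar S) \<and>
     (\<forall>x\<in>Mcar S. \<forall>x'\<in>Mcar S. \<forall>y\<in>Mcar S.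
        Md S (f x y) (f x' y) \<le> Md S x x' \<and> Md S (f y x) (f y x') \<le> Md S x x')"

definition is_Lstr :: "'a lstr \<Rightarrow> bool" where
  "is_Lstr S \<longleftrightarrow>
     Mzero S \<in> Mcar S \<and> Mone S \<in> Mcar S \<and>
     (\<forall>x\<in>Mcar S. \<forall>y\<in>Mcar S. 0 \<le> Md S x y \<and> Md S x y \<le> 1 \<and>
         (Md S x y = 0 \<longleftrightarrow> x = y) \<and> Md S x y = Md S y x) \<and>
     (\<forall>x\<in>Mcar S. \<forall>y\<in>Mcar S. \<forall>z\<in>Mcar S. Md S x z \<le> Md S x y + Md S y z) \<and>
     (\<forall>s::nat \<Rightarrow> 'a. (\<forall>n. s n \<in> Mcar S) \<longrightarrow>
         (\<forall>e>0. \<exists>N. \<forall>m\<ge>N. \<forall>n\<ge>N. Md S (s m) (s n) < e) \<longrightarrow>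
         (\<exists>l\<in>Mcar S. \<forall>e>0. \<exists>N. \<forall>n\<ge>N. Md S (s n) l < e)) \<and>
     lip2 S (Madd S) \<and> lip2 S (Mmul S) \<and> lip2 S (Mmeet S) \<and> lip2 S (Mjoin S)"

datatype 'a tm = V nat | Par 'a | Plus "'a tm" "'a tm" | Times "'a tm" "'a tm"
  | Meet "'a tm" "'a tm" | Join "'a tm" "'a tm" | Zero | One

primrec tm_eval :: "'a lstr \<Rightarrow> (nat \<Rightarrow> 'a) \<Rightarrow> 'a tm \<Rightarrow> 'a" where
  "tm_eval S e (V n) = e n"
| "tm_eval S e (Par a) = a"
| "tm_eval S e (Plus s t) = Madd S (tm_eval S e s) (tm_eval S e t)"
| "tm_eval S e (Times s t) = Mmul S (tm_eval S e s) (tm_eval S e t)"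
| "tm_eval S e (Meet s t) = Mmeet S (tm_eval S e s) (tm_eval S e t)"
| "tm_eval S e (Join s t) = Mjoin S (tm_eval S e s) (tm_eval S e t)"
| "tm_eval S e Zero = Mzero S"
| "tm_eval S e One = Mone S"

primrec fv_tm :: "'a tm \<Rightarrow> nat set" where
  "fv_tm (V n) = {n}"
| "fv_tm (Par a) = {}"
| "fv_tm (Plus s t) = fv_tm s \<union> fv_tm t"
| "fv_tm (Times s t) = fv_tm s \<union> fv_tm t"
| "fv_tm (Meet s t) = fv_tm s \<union> fv_tm t"
| "fv_tm (Join s t) = fv_tm s \<union> fv_tm t"
| "fv_tm Zero = {}"
| "fv_tm One = {}"

datatype 'a af = AOne | ADist "'a tm" "'a tm" | AAdd "'a af" "'a af"
  | AScal real "'a af" | ASup nat "'a af" | AInf nat "'a af"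

primrec af_eval :: "'a lstr \<Rightarrow> (nat \<Rightarrow> 'a) \<Rightarrow> 'a af \<Rightarrow> real" where
  "af_eval S e AOne = 1"
| "af_eval S e (ADist s t) = Md S (tm_eval S e s) (tm_eval S e t)"
| "af_eval S e (AAdd \<phi> \<psi>) = af_eval S e \<phi> + af_eval S e \<psi>"
| "af_eval S e (AScal r \<phi>) = r * af_eval S e \<phi>"
| "af_eval S e (ASup n \<phi>) = (SUP b\<in>Mcar S. af_eval S (e(n := b)) \<phi>)"
| "af_eval S e (AInf n \<phi>) = (INF b\<in>Mcar S. af_eval S (e(n := b)) \<phi>)"

primrec fv_af :: "'a af \<Rightarrow> nat set" where
  "fv_af AOne = {}"
| "fv_af (ADist s t) = fv_tm s \<union> fv_tm t"
| "fv_af (AAdd \<phi> \<psi>) = fv_af \<phi> \<union> fv_af \<psi>"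
| "fv_af (AScal r \<phi>) = fv_af \<phi>"
| "fv_af (ASup n \<phi>) = fv_af \<phi> - {n}"
| "fv_af (AInf n \<phi>) = fv_af \<phi> - {n}"

datatype 'a fo = FEq "'a tm" "'a tm" | FNeg "'a fo" | FConj "'a fo" "'a fo" | FEx nat "'a fo"

primrec fo_sat :: "'a lstr \<Rightarrow> (nat \<Rightarrow> 'a) \<Rightarrow> 'a fo \<Rightarrow> bool" where
  "fo_sat S e (FEq s t) = (tm_eval S e s = tm_eval S e t)"
| "fo_sat S e (FNeg \<phi>) = (\<not> fo_sat S e \<phi>)"
| "fo_sat S e (FConj \<phi> \<psi>) = (fo_sat S e \<phi> \<and> fo_sat S e \<psi>)"
| "fo_sat S e (FEx n \<phi>) = (\<exists>b\<in>Mcar S. fo_sat S (e(n := b)) \<phi>)"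

definition is_PA :: "'b lstr \<Rightarrow> bool" where
  "is_PA N \<longleftrightarrow>
     (let C = Mcar N; s = (\<lambda>x. Madd N x (Mone N));
          le = (\<lambda>x y. \<exists>z\<in>C. Madd N x z = y) in
     Mzero N \<in> C \<and> Mone N \<in> C \<and>
     (\<forall>x\<in>C. \<forall>y\<in>C. Madd N x y \<in> C \<and> Mmul N x y \<in> C) \<and>
     (\<forall>x\<in>C. \<forall>y\<in>C. Md N x y = (if x = y then 0 else 1)) \<and>
     (\<forall>x\<in>C. s x \<noteq> Mzero N) \<and>
     (\<forall>x\<in>C. \<forall>y\<in>C. s x = s y \<longrightarrow> x = y) \<and>
     (\<forall>x\<in>C. Madd N x (Mzero N) = x) \<and>
     (\<forall>x\<in>C. \<forall>y\<in>C. Madd N x (s y) = s (Madd N x y)) \<and>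
     (\<forall>x\<in>C. Mmul N x (Mzero N) = Mzero N) \<and>
     (\<forall>x\<in>C. \<forall>y\<in>C. Mmul N x (s y) = Madd N (Mmul N x y) x) \<and>
     (\<forall>x\<in>C. \<forall>y\<in>C. Mmeet N x y = (if le x y then x else y)) \<and>
     (\<forall>x\<in>C. \<forall>y\<in>C. Mjoin N x y = (if le x y then y else x)) \<and>
     (\<forall>(\<phi> :: 'b fo) k (e :: nat \<Rightarrow> 'b). set_fo \<phi> = {} \<longrightarrow> (\<forall>n. e n \<in> C) \<longrightarrow>
        fo_sat N (e(k := Mzero N)) \<phi> \<longrightarrow>
        (\<forall>a\<in>C. fo_sat N (e(k := a)) \<phi> \<longrightarrow> fo_sat N (e(k := s a)) \<phi>) \<longrightarrow>
        (\<forall>a\<in>C. fo_sat N (e(k := a)) \<phi>)))"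

text \<open>PA models are taken with carrier in nat
  (countable models suffice by downward Loewenheim-Skolem).\<close>
definition models_AA :: "'a lstr \<Rightarrow> bool" where
  "models_AA M \<longleftrightarrow>
     (\<forall>\<phi> :: nat af. fv_af \<phi> = {} \<and> set_af \<phi> = {} \<longrightarrow>
        (\<forall>N :: nat lstr. is_PA N \<longrightarrow> 0 \<le> af_eval N (\<lambda>_. Mzero N) \<phi>) \<longrightarrow>
        0 \<le> af_eval M (\<lambda>_. Mzero M) (map_af (\<lambda>_. Mzero M) \<phi>))"

definition in_dom :: "'a set \<Rightarrow> 'a af \<Rightarrow> bool" where
  "in_dom A \<phi> \<longleftrightarrow> fv_af \<phi> \<subseteq> {0} \<and> set_af \<phi> \<subseteq> A"

definition is_type :: "'a lstr \<Rightarrow> 'a set \<Rightarrow> ('a af \<Rightarrow> real) \<Rightarrow> bool" where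
  "is_type M A p \<longleftrightarrow>
     (\<forall>\<phi> \<psi>. in_dom A \<phi> \<and> in_dom A \<psi> \<longrightarrow> p (AAdd \<phi> \<psi>) = p \<phi> + p \<psi>) \<and>
     (\<forall>r \<phi>. in_dom A \<phi> \<longrightarrow> p (AScal r \<phi>) = r * p \<phi>) \<and>
     p AOne = 1 \<and>
     (\<forall>\<phi>. in_dom A \<phi> \<and> (\<forall>b\<in>Mcar M. 0 \<le> af_eval M (\<lambda>_. b) \<phi>) \<longrightarrow> 0 \<le> p \<phi>)"

definition is_extreme_type :: "'a lstr \<Rightarrow> 'a set \<Rightarrow> ('a af \<Rightarrow> real) \<Rightarrow> bool" where
  "is_extreme_type M A p \<longleftrightarrow> is_type M A p \<and>
     (\<forall>q r t. is_type M A q \<and> is_type M A r \<and> 0 < t \<and> t < 1 \<and>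
        (\<forall>\<phi>. in_dom A \<phi> \<longrightarrow> p \<phi> = t * q \<phi> + (1 - t) * r \<phi>) \<longrightarrow>
        (\<forall>\<phi>. in_dom A \<phi> \<longrightarrow> q \<phi> = r \<phi>))"

definition realized :: "'a lstr \<Rightarrow> 'a set \<Rightarrow> ('a af \<Rightarrow> real) \<Rightarrow> bool" where
  "realized M A p \<longleftrightarrow> (\<exists>b\<in>Mcar M. \<forall>\<phi>. in_dom A \<phi> \<longrightarrow> p \<phi> = af_eval M (\<lambda>_. b) \<phi>)"

definition ext_aleph0_saturated :: "'a lstr \<Rightarrow> bool" where
  "ext_aleph0_saturated M \<longleftrightarrow>
     (\<forall>A p. finite A \<and> A \<subseteq> Mcar M \<and> is_extreme_type M A p \<longrightarrow> realized M A p)"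

definition normal :: "'a lstr \<Rightarrow> 'a \<Rightarrow> bool" where
  "normal M x \<longleftrightarrow> Md M x (Mzero M) = 1"

definition leq :: "'a lstr \<Rightarrow> 'a \<Rightarrow> 'a \<Rightarrow> bool" where
  "leq M x y \<longleftrightarrow> Mmeet M x y = x"

definition definable_E :: "'a lstr \<Rightarrow> ('a \<Rightarrow> 'a \<Rightarrow> 'a) \<Rightarrow> bool" where
  "definable_E M h \<longleftrightarrow>
     (\<forall>\<epsilon>>0. \<exists>\<phi>. fv_af \<phi> \<subseteq> {0,1,2} \<and> set_af \<phi> \<subseteq> Mcar M \<and>
        (\<forall>x\<in>Mcar M. \<forall>y\<in>Mcar M. \<forall>z\<in>Mcar M. normal M x \<longrightarrow>
           \<bar>Md M (h x y) z -
              af_eval M (\<lambda>n. if n = 0 then x else if n = 1 then y else z) \<phi>\<bar> \<le> \<epsilon>))"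

definition divrem :: "'a lstr \<Rightarrow> 'a \<Rightarrow> 'a \<Rightarrow> 'a \<Rightarrow> 'a \<Rightarrow> bool" where
  "divrem M x y u v \<longleftrightarrow> y = Madd M (Mmul M x u) v \<and> leq M (Madd M v (Mone M)) x"

end

theory Submission
  imports Defs
begin


locale pa = fixes N :: "'b lstr" assumes PA: "is_PA N"
begin

abbreviation "C \<equiv> Mcar N"
abbreviation "z \<equiv> Mzero N"
abbreviation "S x \<equiv> Madd N x (Mone N)"
abbreviation "add \<equiv> Madd N"
abbreviation "mul \<equiv> Mmul N"
abbreviation "le x y \<equiv> (\<exists>t\<in>C. add x t = y)"

lemma PAc: "z \<in> C \<and> Mone N \<in> C \<and>
     (\<forall>x\<in>C. \<forall>y\<in>C. add x y \<in> C \<and> mul x y \<in> C) \<and>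
     (\<forall>x\<in>C. \<forall>y\<in>C. Md N x y = (if x = y then 0 else 1)) \<and>
     (\<forall>x\<in>C. S x \<noteq> z) \<and>
     (\<forall>x\<in>C. \<forall>y\<in>C. S x = S y \<longrightarrow> x = y) \<and>
     (\<forall>x\<in>C. add x z = x) \<and>
     (\<forall>x\<in>C. \<forall>y\<in>C. add x (S y) = S (add x y)) \<and>
     (\<forall>x\<in>C. mul x z = z) \<and>
     (\<forall>x\<in>C. \<forall>y\<in>C. mul x (S y) = add (mul x y) x) \<and>
     (\<forall>x\<in>C. \<forall>y\<in>C. Mmeet N x y = (if le x y then x else y))"
  using PA unfolding is_PA_def Let_def by (elim conjE) (intro conjI; assumption)

lemma zero_in: "z \<in> C" and one_in: "Mone N \<in> C"
  and add_in: "x \<in> C \<Longrightarrow> y \<in> C \<Longrightarrow> add x y \<in> C"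
  and mul_in: "x \<in> C \<Longrightarrow> y \<in> C \<Longrightarrow> mul x y \<in> C"
  and dist_eq: "x \<in> C \<Longrightarrow> y \<in> C \<Longrightarrow> Md N x y = (if x = y then 0 else 1)"
  and suc_neq0: "x \<in> C \<Longrightarrow> S x \<noteq> z"
  and suc_inj: "x \<in> C \<Longrightarrow> y \<in> C \<Longrightarrow> S x = S y \<longleftrightarrow> x = y"
  and add_0: "x \<in> C \<Longrightarrow> add x z = x"
  and add_suc: "x \<in> C \<Longrightarrow> y \<in> C \<Longrightarrow> add x (S y) = S (add x y)"
  and mul_0: "x \<in> C \<Longrightarrow> mul x z = z"
  and mul_suc: "x \<in> C \<Longrightarrow> y \<in> C \<Longrightarrow> mul x (S y) = add (mul x y) x"
  and meet_eq: "x \<in> C \<Longrightarrow> y \<in> C \<Longrightarrow> Mmeet N x y = (if le x y then x else y)"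
  using PAc by blast+

lemma suc_in: "x \<in> C \<Longrightarrow> S x \<in> C" by (simp add: add_in one_in)

lemma ind:
  assumes "set_fo \<phi> = {}" "\<forall>n. e n \<in> C"
    "\<And>a. a \<in> C \<Longrightarrow> fo_sat N (e(k:=a)) \<phi> = P a"
    "P z" "\<And>a. a\<in>C \<Longrightarrow> P a \<Longrightarrow> P (S a)" "a \<in> C"
  shows "P a"
proof -
  have I: "\<forall>(\<phi> :: 'b fo) k (e :: nat \<Rightarrow> 'b). set_fo \<phi> = {} \<longrightarrow> (\<forall>n. e n \<in> C) \<longrightarrow>
        fo_sat N (e(k := z)) \<phi> \<longrightarrow>
        (\<forall>a\<in>C. fo_sat N (e(k := a)) \<phi> \<longrightarrow> fo_sat N (e(k := S a)) \<phi>) \<longrightarrow>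
        (\<forall>a\<in>C. fo_sat N (e(k := a)) \<phi>)"
    using PA unfolding is_PA_def Let_def by blast
  have "fo_sat N (e(k := a)) \<phi>"
    using I assms(1,2) assms(3-6) zero_in suc_in by (metis (no_types, lifting))
  thus ?thesis using assms(3,6) by simp
qed

lemma add_0_left: "a \<in> C \<Longrightarrow> add z a = a"
  by (rule ind[where \<phi>="FEq (Plus Zero (V 0)) (V 0)" and e="\<lambda>_. z" and k=0 and P="\<lambda>a. add z a = a"])
     (auto simp: zero_in add_0 add_suc one_in)

lemma add_suc_left: "b \<in> C \<Longrightarrow> a \<in> C \<Longrightarrow> add (S b) a = S (add b a)"
  by (rule ind[where \<phi>="FEq (Plus (Plus (V 1) One) (V 0)) (Plus (Plus (V 1) (V 0)) One)"
      and e="\<lambda>n. if n = 1 then b else z" and k=0 and P="\<lambda>a. add (S b) a = S (add b a)"])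
     (auto simp: zero_in add_0 add_suc one_in suc_in add_in)

lemma add_comm: "a \<in> C \<Longrightarrow> b \<in> C \<Longrightarrow> add a b = add b a"
  by (rule ind[where \<phi>="FEq (Plus (V 0) (V 1)) (Plus (V 1) (V 0))"
      and e="\<lambda>n. if n = 1 then b else z" and k=0 and P="\<lambda>a. add a b = add b a"])
     (auto simp: zero_in add_0 add_suc one_in suc_in add_in add_0_left add_suc_left)

lemma add_assoc: "a \<in> C \<Longrightarrow> b \<in> C \<Longrightarrow> c \<in> C \<Longrightarrow> add (add a b) c = add a (add b c)"
  by (rule ind[where \<phi>="FEq (Plus (Plus (V 1) (V 2)) (V 0)) (Plus (V 1) (Plus (V 2) (V 0)))"
      and e="\<lambda>n. if n = 1 then a else if n = 2 then b else z" and k=0 and P="\<lambda>c. add (add a b) c = add a (add b c)"])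
     (auto simp: zero_in add_0 add_suc one_in suc_in add_in)

lemma add_cancel_right: "v \<in> C \<Longrightarrow> w \<in> C \<Longrightarrow> a \<in> C \<Longrightarrow> add v a = add w a \<Longrightarrow> v = w"
  by (rule ind[where \<phi>="FNeg (FConj (FEq (Plus (V 1) (V 0)) (Plus (V 2) (V 0))) (FNeg (FEq (V 1) (V 2))))"
      and e="\<lambda>n. if n = 1 then v else if n = 2 then w else z" and k=0 and
      P="\<lambda>a. add v a = add w a \<longrightarrow> v = w", rule_format])
     (auto simp: zero_in add_0 add_suc one_in suc_in add_in suc_inj)

lemma add_cancel_left: "v \<in> C \<Longrightarrow> w \<in> C \<Longrightarrow> a \<in> C \<Longrightarrow> add a v = add a w \<Longrightarrow> v = w"
  using add_cancel_right add_comm by metis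

lemma zero_or_suc: "a \<in> C \<Longrightarrow> a = z \<or> (\<exists>b\<in>C. a = S b)"
  by (rule ind[where \<phi>="FNeg (FConj (FNeg (FEq (V 0) Zero)) (FNeg (FEx 1 (FEq (V 0) (Plus (V 1) One)))))"
      and e="\<lambda>n. z" and k=0 and P="\<lambda>a. a = z \<or> (\<exists>b\<in>C. a = S b)"])
     (auto simp: zero_in)

lemma add_suc_neq: "a \<in> C \<Longrightarrow> k \<in> C \<Longrightarrow> add a (S k) \<noteq> a"
  by (rule ind[where \<phi>="FNeg (FEq (Plus (V 0) (Plus (V 1) One)) (V 0))"
      and e="\<lambda>n. if n = 1 then k else z" and k=0 and P="\<lambda>a. add a (S k) \<noteq> a"])
     (auto simp: zero_in add_0_left suc_neq0 add_suc_left suc_in add_in suc_inj)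

lemma distrib: assumes x: "x \<in> C" and a: "a \<in> C" and b: "b \<in> C" shows "mul x (add a b) = add (mul x a) (mul x b)"
proof (rule ind[where \<phi>="FEq (Times (V 1) (Plus (V 2) (V 0))) (Plus (Times (V 1) (V 2)) (Times (V 1) (V 0)))"
      and e="\<lambda>n. if n = 1 then x else if n = 2 then a else z" and k=0 and P="\<lambda>b. mul x (add a b) = add (mul x a) (mul x b)" and a=b])
  fix c assume c: "c \<in> C" and ih: "mul x (add a c) = add (mul x a) (mul x c)"
  have "mul x (add a (S c)) = mul x (S (add a c))" using a c by (simp add: add_suc)
  also have "\<dots> = add (mul x (add a c)) x" using a c x by (simp add: mul_suc add_in)
  also have "\<dots> = add (add (mul x a) (mul x c)) x" using ih by simp
  also have "\<dots> = add (mul x a) (add (mul x c) x)" using a c x by (simp add: add_assoc mul_in)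
  also have "\<dots> = add (mul x a) (mul x (S c))" using c x by (simp add: mul_suc)
  finally show "mul x (add a (S c)) = add (mul x a) (mul x (S c))" .
qed (auto simp: zero_in add_0 mul_in mul_0 x a b)

lemma total: "a \<in> C \<Longrightarrow> b \<in> C \<Longrightarrow> le a b \<or> le b a"
proof (rule ind[where \<phi>="FNeg (FConj (FNeg (FEx 2 (FEq (Plus (V 0) (V 2)) (V 1)))) (FNeg (FEx 2 (FEq (Plus (V 1) (V 2)) (V 0)))))"
      and e="\<lambda>n. if n = 1 then b else z" and k=0 and P="\<lambda>a. le a b \<or> le b a"])
  fix a assume a: "a \<in> C" "b \<in> C" and h: "le a b \<or> le b a"
  show "le (S a) b \<or> le b (S a)"
    using h
  proof
    assume "le b a" then obtain t where "t \<in> C" "add b t = a" by blast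
    then show ?thesis using a by (metis add_suc suc_in)
  next
    assume "le a b" then obtain t where t: "t \<in> C" "add a t = b" by blast
    show ?thesis
    proof (cases "t = z")
      case True
      then have "b = a" using t a add_0 by simp
      have "add b (S z) = S a" using \<open>b = a\<close> a by (simp add: add_suc add_0 zero_in)
      then show ?thesis using a zero_in suc_in by blast
    next
      case False
      then obtain t' where "t' \<in> C" "t = S t'" using zero_or_suc t by blast
      then show ?thesis using a t by (metis add_suc add_suc_left)
    qed
  qed
qed (auto simp: zero_in add_0_left)


lemma le_one: assumes x: "x \<in> C" "x \<noteq> z" shows "le (S z) x"
proof -
  obtain x' where "x' \<in> C" "x = S x'" using zero_or_suc x by blast
  thus ?thesis using add_suc_left add_0_left zero_in by metis
qed

lemma div_exists: assumes x: "x \<in> C" "x \<noteq> z" and y: "y \<in> C" shows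
   "\<exists>u\<in>C. \<exists>v\<in>C. y = add (mul x u) v \<and> le (S v) x"
proof (rule ind[where \<phi>="FEx 3 (FEx 4 (FConj (FEq (V 0) (Plus (Times (V 1) (V 3)) (V 4))) (FEx 5 (FEq (Plus (Plus (V 4) One) (V 5)) (V 1)))))"
      and e="\<lambda>n. if n = 1 then x else z" and k=0 and a=y and P="\<lambda>y. \<exists>u\<in>C. \<exists>v\<in>C. y = add (mul x u) v \<and> le (S v) x"])
  show "\<exists>u\<in>C. \<exists>v\<in>C. z = add (mul x u) v \<and> le (S v) x"
    using x le_one zero_in mul_0 add_0 by metis
  fix a assume a: "a \<in> C" and "\<exists>u\<in>C. \<exists>v\<in>C. a = add (mul x u) v \<and> le (S v) x"
  then obtain u v t where uv: "u \<in> C" "v \<in> C" "a = add (mul x u) v" "t \<in> C" "add (S v) t = x" by blast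
  have Sa: "S a = add (mul x u) (S v)" using uv x by (simp add: add_suc mul_in)
  show "\<exists>u\<in>C. \<exists>v\<in>C. S a = add (mul x u) v \<and> le (S v) x"
  proof (cases "t = z")
    case True
    then have "S v = x" using uv add_0 suc_in by simp
    then have "S a = add (mul x (S u)) z" using Sa uv x by (simp add: mul_suc add_0 add_in mul_in)
    then show ?thesis using le_one x uv suc_in zero_in by blast
  next
    case False
    then obtain t' where t': "t' \<in> C" "t = S t'" using zero_or_suc uv by blast
    have "add (S (S v)) t' = x" using uv t' by (metis add_suc add_suc_left suc_in)
    then show ?thesis using Sa uv suc_in t' by blast
  qed
qed (auto simp: zero_in x y)

lemma div_unique_aux:
  assumes x: "x \<in> C" "x \<noteq> z" and c: "u \<in> C" "v \<in> C" "v' \<in> C" "w \<in> C"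
    and le: "le (S v) x" and eq: "add (mul x u) v = add (mul x (add u (S w))) v'"
  shows False
proof -
  have "mul x (add u (S w)) = add (mul x u) (add (mul x w) x)"
    using x c by (simp add: distrib suc_in mul_suc)
  then have "add (mul x u) v = add (mul x u) (add (add (mul x w) x) v')"
    using eq x c by (simp add: add_assoc mul_in add_in)
  then have v: "v = add (add (mul x w) x) v'"
    using add_cancel_left x c by (meson add_in mul_in)
  define K where "K = add (mul x w) v'"
  have K: "K \<in> C" using K_def x c by (simp add: add_in mul_in)
  have v2: "v = add x K"
    using v x c unfolding K_def by (metis add_assoc add_comm mul_in)
  obtain t where t: "t \<in> C" "add (S v) t = x" using le by blast
  have "add (S v) t = add v (S t)" using t c by (simp add: add_suc add_suc_left)
  also have "\<dots> = add x (add K (S t))" using v2 x K t by (simp add: add_assoc suc_in)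
  also have "\<dots> = add x (S (add K t))" using K t by (simp add: add_suc)
  finally have "add x (S (add K t)) = x" using t by simp
  thus False using add_suc_neq x K t add_in by blast
qed

lemma div_unique:
  assumes x: "x \<in> C" "x \<noteq> z" and c: "u \<in> C" "v \<in> C" "u' \<in> C" "v' \<in> C"
    and le: "le (S v) x" "le (S v') x" and eq: "add (mul x u) v = add (mul x u') v'"
  shows "u = u'"
proof -
  from total[OF c(1) c(3)] show ?thesis
  proof
    assume "le u u'"
    then obtain t where t: "t \<in> C" "add u t = u'" by blast
    show ?thesis
    proof (cases "t = z")
      case True then show ?thesis using t c add_0 by simp
    next
      case False
      then obtain w where "w \<in> C" "t = S w" using zero_or_suc t by blast
      then show ?thesis using div_unique_aux[OF x c(1,2,4) _ le(1)] eq t by blast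
    qed
  next
    assume "le u' u"
    then obtain t where t: "t \<in> C" "add u' t = u" by blast
    show ?thesis
    proof (cases "t = z")
      case True then show ?thesis using t c add_0 by simp
    next
      case False
      then obtain w where "w \<in> C" "t = S w" using zero_or_suc t by blast
      then show ?thesis using div_unique_aux[OF x c(3,4,2) _ le(2)] eq t by metis
    qed
  qed
qed

end



definition okS :: "'a lstr \<Rightarrow> bool" where
  "okS S \<longleftrightarrow> Mzero S \<in> Mcar S \<and> Mone S \<in> Mcar S \<and>
    (\<forall>x\<in>Mcar S. \<forall>y\<in>Mcar S. 0 \<le> Md S x y \<and> Md S x y \<le> 1 \<and>
      Madd S x y \<in> Mcar S \<and> Mmul S x y \<in> Mcar S \<and> Mmeet S x y \<in> Mcar S \<and> Mjoin S x y \<in> Mcar S)"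

lemma tm_in: "okS S \<Longrightarrow> \<forall>n. e n \<in> Mcar S \<Longrightarrow> set_tm t \<subseteq> Mcar S \<Longrightarrow> tm_eval S e t \<in> Mcar S"
  by (induction t) (auto simp: okS_def)

primrec bnd :: "'a af \<Rightarrow> real" where
  "bnd AOne = 1"
| "bnd (ADist s t) = 1"
| "bnd (AAdd \<phi> \<psi>) = bnd \<phi> + bnd \<psi>"
| "bnd (AScal r \<phi>) = \<bar>r\<bar> * bnd \<phi>"
| "bnd (ASup n \<phi>) = bnd \<phi>"
| "bnd (AInf n \<phi>) = bnd \<phi>"

lemma bdd_abs: "(\<And>b. b \<in> A \<Longrightarrow> \<bar>f b\<bar> \<le> (B::real)) \<Longrightarrow> bdd_below (f ` A) \<and> bdd_above (f ` A)"
proof -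
  assume h: "\<And>b. b \<in> A \<Longrightarrow> \<bar>f b\<bar> \<le> (B::real)"
  have "\<And>b. b \<in> A \<Longrightarrow> -B \<le> f b \<and> f b \<le> B" using h by (metis abs_le_iff minus_le_iff)
  then show ?thesis unfolding bdd_below_def bdd_above_def by blast
qed

lemma INF_bound: "A \<noteq> {} \<Longrightarrow> (\<And>b. b \<in> A \<Longrightarrow> \<bar>f b\<bar> \<le> (B::real)) \<Longrightarrow> \<bar>INF b\<in>A. f b\<bar> \<le> B"
proof -
  assume A: "A \<noteq> {}" and h: "\<And>b. b \<in> A \<Longrightarrow> \<bar>f b\<bar> \<le> B"
  obtain c where c: "c \<in> A" using A by blast
  have bd: "bdd_below (f ` A)" by (meson bdd_abs h)
  have "(INF b\<in>A. f b) \<le> f c" using bd c by (rule cINF_lower)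
  moreover have "-B \<le> (INF b\<in>A. f b)" using A h by (intro cINF_greatest) (auto, metis abs_le_iff minus_le_iff)
  ultimately show ?thesis using h[OF c] by (auto simp: abs_le_iff)
qed

lemma SUP_bound: "A \<noteq> {} \<Longrightarrow> (\<And>b. b \<in> A \<Longrightarrow> \<bar>f b\<bar> \<le> (B::real)) \<Longrightarrow> \<bar>SUP b\<in>A. f b\<bar> \<le> B"
proof -
  assume A: "A \<noteq> {}" and h: "\<And>b. b \<in> A \<Longrightarrow> \<bar>f b\<bar> \<le> B"
  obtain c where c: "c \<in> A" using A by blast
  have bd: "bdd_above (f ` A)" by (meson bdd_abs h)
  have "f c \<le> (SUP b\<in>A. f b)" using cSUP_upper[OF c bd] .
  moreover have "(SUP b\<in>A. f b) \<le> B" using A h by (intro cSUP_least) (auto simp: abs_le_iff)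
  ultimately show ?thesis using h[OF c] by (auto simp: abs_le_iff)
qed

lemma af_bnd: "okS S \<Longrightarrow> \<forall>n. e n \<in> Mcar S \<Longrightarrow> set_af \<phi> \<subseteq> Mcar S \<Longrightarrow> \<bar>af_eval S e \<phi>\<bar> \<le> bnd \<phi>"
proof (induction \<phi> arbitrary: e)
  case AOne then show ?case by simp
next
  case (ADist s t)
  then have "tm_eval S e s \<in> Mcar S" "tm_eval S e t \<in> Mcar S" by (auto intro!: tm_in)
  then show ?case using ADist.prems(1) by (auto simp: okS_def)
next
  case (AAdd \<phi> \<psi>)
  have 1: "\<bar>af_eval S e \<phi>\<bar> \<le> bnd \<phi>" using AAdd.IH(1)[OF AAdd.prems(1,2)] AAdd.prems(3) by simp
  have 2: "\<bar>af_eval S e \<psi>\<bar> \<le> bnd \<psi>" using AAdd.IH(2)[OF AAdd.prems(1,2)] AAdd.prems(3) by simp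
  show ?case using 1 2 abs_triangle_ineq[of "af_eval S e \<phi>" "af_eval S e \<psi>"] by simp
next
  case (AScal r \<phi>) then show ?case by (auto simp: abs_mult intro!: mult_left_mono)
next
  case (ASup n \<phi>)
  have ne: "Mcar S \<noteq> {}" using ASup.prems(1) by (auto simp: okS_def)
  show ?case using ASup by (auto intro!: SUP_bound ne)
next
  case (AInf n \<phi>)
  have ne: "Mcar S \<noteq> {}" using AInf.prems(1) by (auto simp: okS_def)
  show ?case using AInf by (auto intro!: INF_bound ne)
qed

lemma af_inf_inst:
  assumes "okS S" "\<forall>n. e n \<in> Mcar S" "set_af \<phi> \<subseteq> Mcar S" "0 \<le> af_eval S e (AInf k \<phi>)" "b \<in> Mcar S"
  shows "0 \<le> af_eval S (e(k:=b)) \<phi>"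
proof -
  have "bdd_below ((\<lambda>b. af_eval S (e(k:=b)) \<phi>) ` Mcar S)"
    using af_bnd[OF assms(1) _ assms(3)] assms(2) bdd_abs[of "Mcar S" "\<lambda>b. af_eval S (e(k:=b)) \<phi>" "bnd \<phi>"]
    by simp
  then have "af_eval S e (AInf k \<phi>) \<le> af_eval S (e(k:=b)) \<phi>" using assms(5) by (simp add: cINF_lower[of "\<lambda>b. af_eval S (e(k:=b)) \<phi>" "Mcar S" b])
  thus ?thesis using assms(4) by simp
qed

lemma af_inf_le:
  assumes "okS S" "\<forall>n. e n \<in> Mcar S" "set_af \<phi> \<subseteq> Mcar S" "b \<in> Mcar S"
  shows "af_eval S e (AInf k \<phi>) \<le> af_eval S (e(k:=b)) \<phi>"
proof -
  have "bdd_below ((\<lambda>b. af_eval S (e(k:=b)) \<phi>) ` Mcar S)"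
    using af_bnd[OF assms(1) _ assms(3)] assms(2) bdd_abs[of "Mcar S" "\<lambda>b. af_eval S (e(k:=b)) \<phi>" "bnd \<phi>"]
    by simp
  then show ?thesis using assms(4) by (simp add: cINF_lower[of "\<lambda>b. af_eval S (e(k:=b)) \<phi>" "Mcar S" b])
qed

lemma af_inf_intro:
  assumes "Mcar S \<noteq> {}" "\<And>b. b \<in> Mcar S \<Longrightarrow> c \<le> af_eval S (e(k:=b)) \<phi>"
  shows "c \<le> af_eval S e (AInf k \<phi>)"
  using assms by (simp add: cINF_greatest)

lemma af_inf_lt:
  assumes "Mcar S \<noteq> {}" "af_eval S e (AInf k \<phi>) < c"
  shows "\<exists>b\<in>Mcar S. af_eval S (e(k:=b)) \<phi> < c"
  using af_inf_intro[OF assms(1), of c e k \<phi>] assms(2) by force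




definition Lt :: "'a tm \<Rightarrow> 'a af" where
  "Lt v = ADist (Meet (Plus v One) (V 0)) (Plus v One)"

definition psiA :: "'a af" where
  "psiA = AAdd (ADist (Plus (Times (V 0) (V 1)) (V 2)) (Plus (Times (V 0) (V 3)) (V 4)))
     (AAdd (AAdd AOne (AScal (-1) (ADist (V 0) Zero)))
       (AAdd (Lt (V 2)) (AAdd (Lt (V 4)) (AScal (-1) (ADist (V 1) (V 3))))))"

definition psiB :: "'a af" where
  "psiB = AAdd (ADist (V 1) (V 3)) (AAdd (ADist (Plus (Times (V 0) (V 1)) (V 2)) (Plus (Times (V 0) (V 3)) (V 4)))
     (AScal (-1) (ADist (V 2) (V 4))))"

definition Ec :: "'a af" where
  "Ec = AAdd (ADist (V 1) (Plus (Times (V 0) (V 2)) (V 3))) (Lt (V 3))"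

definition psiC :: "'a af" where
  "psiC = AAdd (AScal 2 (AAdd AOne (AScal (-1) (ADist (V 0) Zero)))) (AScal (-1) (AInf 2 (AInf 3 Ec)))"

definition sentA :: "'a af" where "sentA = AInf 0 (AInf 1 (AInf 2 (AInf 3 (AInf 4 psiA))))"
definition sentB :: "'a af" where "sentB = AInf 0 (AInf 1 (AInf 2 (AInf 3 (AInf 4 psiB))))"
definition sentC :: "'a af" where "sentC = AInf 0 (AInf 1 psiC)"

lemmas sdefs = Lt_def psiA_def psiB_def Ec_def psiC_def sentA_def sentB_def sentC_def

context pa begin

lemma join_in: "x \<in> C \<Longrightarrow> y \<in> C \<Longrightarrow> Mjoin N x y \<in> C"
proof -
  assume "x \<in> C" "y \<in> C"
  moreover have "\<forall>x\<in>C. \<forall>y\<in>C. Mjoin N x y = (if le x y then y else x)"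
    using PA unfolding is_PA_def Let_def by (elim conjE) assumption
  ultimately show ?thesis by simp
qed

lemma okS_PA: "okS N"
  unfolding okS_def using zero_in one_in add_in mul_in join_in dist_eq
  by (auto simp: meet_eq)

lemma Cne: "C \<noteq> {}" using zero_in by blast

lemma meet_le: "a \<in> C \<Longrightarrow> x \<in> C \<Longrightarrow> Mmeet N (S a) x = S a \<Longrightarrow> le (S a) x"
  using meet_eq[of "S a" x] suc_in add_0 zero_in by (auto split: if_splits)

lemma explA:
  assumes c: "x \<in> C" "u \<in> C" "v \<in> C" "u' \<in> C" "v' \<in> C"
  shows "0 \<le> Md N (add (mul x u) v) (add (mul x u') v') + (1 - Md N x z +
     (Md N (Mmeet N (S v) x) (S v) + (Md N (Mmeet N (S v') x) (S v') - Md N u u')))"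
proof -
  have ms: "Mmeet N (S v) x \<in> C" "Mmeet N (S v') x \<in> C" using c suc_in by (auto simp: meet_eq)
  have pr: "add (mul x u) v \<in> C" "add (mul x u') v' \<in> C" using c by (auto simp: add_in mul_in)
  show ?thesis
  proof (cases "u = u'")
    case True then show ?thesis using c ms pr suc_in zero_in by (simp add: dist_eq)
  next
    case False
    show ?thesis
    proof (cases "x = z \<or> Mmeet N (S v) x \<noteq> S v \<or> Mmeet N (S v') x \<noteq> S v' \<or> add (mul x u) v \<noteq> add (mul x u') v'")
      case True then show ?thesis using c ms pr suc_in zero_in by (auto simp: dist_eq)
    next
      case F: False
      then have "u = u'" using div_unique[OF c(1) _ c(2,3,4,5) meet_le meet_le] c by blast
      then show ?thesis using False by blast
    qed
  qed
qed

lemma explB: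
  assumes c: "x \<in> C" "u \<in> C" "v \<in> C" "u' \<in> C" "v' \<in> C"
  shows "0 \<le> Md N u u' + (Md N (add (mul x u) v) (add (mul x u') v') - Md N v v')"
proof -
  have pr: "add (mul x u) v \<in> C" "add (mul x u') v' \<in> C" using c by (auto simp: add_in mul_in)
  have "v \<noteq> v' \<Longrightarrow> u = u' \<Longrightarrow> add (mul x u) v \<noteq> add (mul x u') v'"
    using add_cancel_left c mul_in by blast
  then show ?thesis using c pr by (auto simp: dist_eq)
qed

lemma PA_A: "0 \<le> af_eval N (\<lambda>_. z) sentA"
  unfolding sentA_def
  by (intro af_inf_intro Cne) (simp add: psiA_def Lt_def explA)

lemma PA_B: "0 \<le> af_eval N (\<lambda>_. z) sentB"
  unfolding sentB_def
  by (intro af_inf_intro Cne) (simp add: psiB_def explB)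

lemma PA_C: "0 \<le> af_eval N (\<lambda>_. z) sentC"
  unfolding sentC_def
proof (intro af_inf_intro Cne)
  fix x y assume x: "x \<in> C" and y: "y \<in> C"
  define e0 where "e0 = ((\<lambda>_::nat. z)(0 := x))(1 := y)"
  have e0: "\<forall>n. e0 n \<in> C" using x y zero_in by (auto simp: e0_def)
  have sE: "set_af Ec \<subseteq> C" "set_af (AInf 3 Ec) \<subseteq> C" by (simp_all add: Ec_def Lt_def)
  have I: "af_eval N e0 (AInf 2 (AInf 3 Ec)) \<le> af_eval N ((e0(2:=u))(3:=v)) Ec" if "u \<in> C" "v \<in> C" for u v
  proof -
    have "af_eval N e0 (AInf 2 (AInf 3 Ec)) \<le> af_eval N (e0(2:=u)) (AInf 3 Ec)"
      by (rule af_inf_le[OF okS_PA e0]) (use sE that in auto)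
    also have "\<dots> \<le> af_eval N ((e0(2:=u))(3:=v)) Ec"
      by (rule af_inf_le[OF okS_PA]) (use sE that e0 in auto)
    finally show ?thesis .
  qed
  have "af_eval N e0 (AInf 2 (AInf 3 Ec)) \<le> 2 * (1 - Md N x z)"
  proof (cases "x = z")
    case True
    have "af_eval N ((e0(2:=z))(3:=z)) Ec \<le> bnd (Ec :: 'b af)"
    proof -
      have e2: "\<forall>n. ((e0(2:=z))(3:=z)) n \<in> C" using e0 zero_in by auto
      from af_bnd[OF okS_PA e2 sE(1)] show ?thesis by (rule abs_le_D1)
    qed
    then show ?thesis using I[OF zero_in zero_in] True zero_in by (simp add: dist_eq Ec_def Lt_def)
  next
    case False
    obtain u v where uv: "u \<in> C" "v \<in> C" "y = add (mul x u) v" "le (S v) x"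
      using div_exists[OF x False y] by blast
    have "Mmeet N (S v) x = S v" using meet_eq[of "S v" x] uv x suc_in by simp
    then have "af_eval N ((e0(2:=u))(3:=v)) Ec = 0"
      using uv x y suc_in by (simp add: Ec_def Lt_def e0_def dist_eq add_in mul_in meet_eq)
    then show ?thesis using I[OF uv(1,2)] False x zero_in by (simp add: dist_eq)
  qed
  moreover have "e0 0 = x" by (simp add: e0_def)
  ultimately have "0 \<le> af_eval N (e0) psiC" by (simp add: psiC_def)
  then show "0 \<le> af_eval N (((\<lambda>_. z)(0 := x))(1 := y)) psiC" by (simp add: e0_def)
qed

end



locale mm = fixes M :: "'a lstr" assumes L: "is_Lstr M" and AA: "models_AA M"
begin

abbreviation "CM \<equiv> Mcar M"
abbreviation "D \<equiv> Md M"
abbreviation "ZM \<equiv> Mzero M"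
abbreviation "Sx a \<equiv> Madd M a (Mone M)"
abbreviation "P x u v \<equiv> Madd M (Mmul M x u) v"
abbreviation "Lm v x \<equiv> D (Mmeet M (Sx v) x) (Sx v)"

lemma zM: "ZM \<in> CM" and oM: "Mone M \<in> CM"
  and dpos: "a \<in> CM \<Longrightarrow> b \<in> CM \<Longrightarrow> 0 \<le> D a b"
  and dle1: "a \<in> CM \<Longrightarrow> b \<in> CM \<Longrightarrow> D a b \<le> 1"
  and d0: "a \<in> CM \<Longrightarrow> b \<in> CM \<Longrightarrow> D a b = 0 \<longleftrightarrow> a = b"
  and dsym: "a \<in> CM \<Longrightarrow> b \<in> CM \<Longrightarrow> D a b = D b a"
  and tri: "a \<in> CM \<Longrightarrow> b \<in> CM \<Longrightarrow> c \<in> CM \<Longrightarrow> D a c \<le> D a b + D b c"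
  and compl: "(\<forall>n. (s :: nat \<Rightarrow> 'a) n \<in> CM) \<Longrightarrow> (\<forall>e>0. \<exists>N. \<forall>m\<ge>N. \<forall>n\<ge>N. D (s m) (s n) < e) \<Longrightarrow>
         (\<exists>l\<in>CM. \<forall>e>0. \<exists>N. \<forall>n\<ge>N. D (s n) l < e)"
  and ladd: "lip2 M (Madd M)" and lmul: "lip2 M (Mmul M)" and lmeet: "lip2 M (Mmeet M)" and ljoin: "lip2 M (Mjoin M)"
proof -
  have H: "ZM \<in> CM \<and> Mone M \<in> CM \<and>
     (\<forall>x\<in>CM. \<forall>y\<in>CM. 0 \<le> D x y \<and> D x y \<le> 1 \<and> (D x y = 0 \<longleftrightarrow> x = y) \<and> D x y = D y x) \<and>
     (\<forall>x\<in>CM. \<forall>y\<in>CM. \<forall>z\<in>CM. D x z \<le> D x y + D y z) \<and>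
     (\<forall>s::nat \<Rightarrow> 'a. (\<forall>n. s n \<in> CM) \<longrightarrow>
         (\<forall>e>0. \<exists>N. \<forall>m\<ge>N. \<forall>n\<ge>N. D (s m) (s n) < e) \<longrightarrow>
         (\<exists>l\<in>CM. \<forall>e>0. \<exists>N. \<forall>n\<ge>N. D (s n) l < e)) \<and>
     lip2 M (Madd M) \<and> lip2 M (Mmul M) \<and> lip2 M (Mmeet M) \<and> lip2 M (Mjoin M)"
    using L unfolding is_Lstr_def .
  note H1 = conjunct1[OF H] and H2 = conjunct1[OF conjunct2[OF H]]
    and H3 = conjunct1[OF conjunct2[OF conjunct2[OF H]]]
    and H4 = conjunct1[OF conjunct2[OF conjunct2[OF conjunct2[OF H]]]]
    and H5 = conjunct1[OF conjunct2[OF conjunct2[OF conjunct2[OF conjunct2[OF H]]]]]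
    and H6 = conjunct2[OF conjunct2[OF conjunct2[OF conjunct2[OF conjunct2[OF H]]]]]
  show "ZM \<in> CM" by (rule H1)
  show "Mone M \<in> CM" by (rule H2)
  show "a \<in> CM \<Longrightarrow> b \<in> CM \<Longrightarrow> 0 \<le> D a b" using H3 by blast
  show "a \<in> CM \<Longrightarrow> b \<in> CM \<Longrightarrow> D a b \<le> 1" using H3 by blast
  show "a \<in> CM \<Longrightarrow> b \<in> CM \<Longrightarrow> D a b = 0 \<longleftrightarrow> a = b" using H3 by blast
  show "a \<in> CM \<Longrightarrow> b \<in> CM \<Longrightarrow> D a b = D b a" using H3 by blast
  show "a \<in> CM \<Longrightarrow> b \<in> CM \<Longrightarrow> c \<in> CM \<Longrightarrow> D a c \<le> D a b + D b c" using H4 by blast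
  show "(\<forall>n. (s :: nat \<Rightarrow> 'a) n \<in> CM) \<Longrightarrow> (\<forall>e>0. \<exists>N. \<forall>m\<ge>N. \<forall>n\<ge>N. D (s m) (s n) < e) \<Longrightarrow>
         (\<exists>l\<in>CM. \<forall>e>0. \<exists>N. \<forall>n\<ge>N. D (s n) l < e)"
  proof -
    assume a1: "\<forall>n. s n \<in> CM" and a2: "\<forall>e>0. \<exists>N. \<forall>m\<ge>N. \<forall>n\<ge>N. D (s m) (s n) < e"
    show "\<exists>l\<in>CM. \<forall>e>0. \<exists>N. \<forall>n\<ge>N. D (s n) l < e" using mp[OF mp[OF spec[OF H5, of s] a1] a2] .
  qed
  show "lip2 M (Madd M)" "lip2 M (Mmul M)" "lip2 M (Mmeet M)" "lip2 M (Mjoin M)" using H6 by blast+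
qed

lemma lipD: "lip2 M f \<Longrightarrow> a \<in> CM \<Longrightarrow> b \<in> CM \<Longrightarrow> f a b \<in> CM"
  "lip2 M f \<Longrightarrow> a \<in> CM \<Longrightarrow> a' \<in> CM \<Longrightarrow> b \<in> CM \<Longrightarrow> D (f a b) (f a' b) \<le> D a a'"
  "lip2 M f \<Longrightarrow> a \<in> CM \<Longrightarrow> a' \<in> CM \<Longrightarrow> b \<in> CM \<Longrightarrow> D (f b a) (f b a') \<le> D a a'"
  unfolding lip2_def by blast+

lemma addM: "a \<in> CM \<Longrightarrow> b \<in> CM \<Longrightarrow> Madd M a b \<in> CM" using lipD(1)[OF ladd] .
lemma mulM: "a \<in> CM \<Longrightarrow> b \<in> CM \<Longrightarrow> Mmul M a b \<in> CM" using lipD(1)[OF lmul] .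
lemma meetM: "a \<in> CM \<Longrightarrow> b \<in> CM \<Longrightarrow> Mmeet M a b \<in> CM" using lipD(1)[OF lmeet] .
lemma SM: "a \<in> CM \<Longrightarrow> Sx a \<in> CM" using addM oM by blast
lemma PM: "x \<in> CM \<Longrightarrow> u \<in> CM \<Longrightarrow> v \<in> CM \<Longrightarrow> P x u v \<in> CM" using addM mulM by blast
lemma drefl: "a \<in> CM \<Longrightarrow> D a a = 0" using d0 by blast

lemma okM: "okS M"
  unfolding okS_def by (intro conjI ballI zM oM dpos dle1 addM mulM meetM lipD(1)[OF ljoin])

lemma transfer:
  assumes "\<And>N :: nat lstr. is_PA N \<Longrightarrow> 0 \<le> af_eval N (\<lambda>_. Mzero N) (\<phi> :: nat af)"
    and "fv_af \<phi> = {}" "set_af \<phi> = {}" "map_af (\<lambda>_. ZM) \<phi> = \<psi>"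
  shows "0 \<le> af_eval M (\<lambda>_. ZM) \<psi>"
  using AA assms unfolding models_AA_def by blast

lemma hA: "0 \<le> af_eval M (\<lambda>_. ZM) sentA"
proof (rule transfer[of sentA])
  show "\<And>N :: nat lstr. is_PA N \<Longrightarrow> 0 \<le> af_eval N (\<lambda>_. Mzero N) sentA"
    by (rule pa.PA_A) (simp add: pa_def)
qed (auto simp: sdefs)

lemma hB: "0 \<le> af_eval M (\<lambda>_. ZM) sentB"
proof (rule transfer[of sentB])
  show "\<And>N :: nat lstr. is_PA N \<Longrightarrow> 0 \<le> af_eval N (\<lambda>_. Mzero N) sentB"
    by (rule pa.PA_B) (simp add: pa_def)
qed (auto simp: sdefs)

lemma hC: "0 \<le> af_eval M (\<lambda>_. ZM) sentC"
proof (rule transfer[of sentC])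
  show "\<And>N :: nat lstr. is_PA N \<Longrightarrow> 0 \<le> af_eval N (\<lambda>_. Mzero N) sentC"
    by (rule pa.PA_C) (simp add: pa_def)
qed (auto simp: sdefs)


lemma CMne: "CM \<noteq> {}" using zM by blast

lemma env_in: "\<forall>n. e n \<in> CM \<Longrightarrow> b \<in> CM \<Longrightarrow> \<forall>n. (e(k:=b)) n \<in> CM" by auto
lemma env0: "\<forall>n. (\<lambda>_::nat. ZM) n \<in> CM" using zM by simp

lemma M_A:
  assumes c: "x \<in> CM" "u \<in> CM" "v \<in> CM" "u' \<in> CM" "v' \<in> CM"
  shows "D u u' \<le> D (P x u v) (P x u' v') + (1 - D x ZM) + Lm v x + Lm v' x"
proof -
  have e1: "\<forall>n. ((\<lambda>_::nat. ZM)(0:=x)) n \<in> CM" by (rule env_in[OF env0 c(1)])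
  have e2: "\<forall>n. ((\<lambda>_::nat. ZM)(0:=x, 1:=u)) n \<in> CM" by (rule env_in[OF e1 c(2)])
  have e3: "\<forall>n. ((\<lambda>_::nat. ZM)(0:=x, 1:=u, 2:=v)) n \<in> CM" by (rule env_in[OF e2 c(3)])
  have e4: "\<forall>n. ((\<lambda>_::nat. ZM)(0:=x, 1:=u, 2:=v, 3:=u')) n \<in> CM" by (rule env_in[OF e3 c(4)])
  have h1: "0 \<le> af_eval M ((\<lambda>_::nat. ZM)(0:=x)) (AInf 1 (AInf 2 (AInf 3 (AInf 4 psiA))))"
    by (rule af_inf_inst[OF okM env0 _ hA[unfolded sentA_def] c(1)]) (simp add: sdefs)
  have h2: "0 \<le> af_eval M ((\<lambda>_::nat. ZM)(0:=x, 1:=u)) (AInf 2 (AInf 3 (AInf 4 psiA)))"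
    by (rule af_inf_inst[OF okM e1 _ h1 c(2)]) (simp add: sdefs)
  have h3: "0 \<le> af_eval M ((\<lambda>_::nat. ZM)(0:=x, 1:=u, 2:=v)) (AInf 3 (AInf 4 psiA))"
    by (rule af_inf_inst[OF okM e2 _ h2 c(3)]) (simp add: sdefs)
  have h4: "0 \<le> af_eval M ((\<lambda>_::nat. ZM)(0:=x, 1:=u, 2:=v, 3:=u')) (AInf 4 psiA)"
    by (rule af_inf_inst[OF okM e3 _ h3 c(4)]) (simp add: sdefs)
  have h5: "0 \<le> af_eval M ((\<lambda>_::nat. ZM)(0:=x, 1:=u, 2:=v, 3:=u', 4:=v')) psiA"
    by (rule af_inf_inst[OF okM e4 _ h4 c(5)]) (simp add: sdefs)
  then show ?thesis by (simp add: psiA_def Lt_def)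
qed

lemma M_B:
  assumes c: "x \<in> CM" "u \<in> CM" "v \<in> CM" "u' \<in> CM" "v' \<in> CM"
  shows "D v v' \<le> D u u' + D (P x u v) (P x u' v')"
proof -
  have e1: "\<forall>n. ((\<lambda>_::nat. ZM)(0:=x)) n \<in> CM" by (rule env_in[OF env0 c(1)])
  have e2: "\<forall>n. ((\<lambda>_::nat. ZM)(0:=x, 1:=u)) n \<in> CM" by (rule env_in[OF e1 c(2)])
  have e3: "\<forall>n. ((\<lambda>_::nat. ZM)(0:=x, 1:=u, 2:=v)) n \<in> CM" by (rule env_in[OF e2 c(3)])
  have e4: "\<forall>n. ((\<lambda>_::nat. ZM)(0:=x, 1:=u, 2:=v, 3:=u')) n \<in> CM" by (rule env_in[OF e3 c(4)])
  have h1: "0 \<le> af_eval M ((\<lambda>_::nat. ZM)(0:=x)) (AInf 1 (AInf 2 (AInf 3 (AInf 4 psiB))))"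
    by (rule af_inf_inst[OF okM env0 _ hB[unfolded sentB_def] c(1)]) (simp add: sdefs)
  have h2: "0 \<le> af_eval M ((\<lambda>_::nat. ZM)(0:=x, 1:=u)) (AInf 2 (AInf 3 (AInf 4 psiB)))"
    by (rule af_inf_inst[OF okM e1 _ h1 c(2)]) (simp add: sdefs)
  have h3: "0 \<le> af_eval M ((\<lambda>_::nat. ZM)(0:=x, 1:=u, 2:=v)) (AInf 3 (AInf 4 psiB))"
    by (rule af_inf_inst[OF okM e2 _ h2 c(3)]) (simp add: sdefs)
  have h4: "0 \<le> af_eval M ((\<lambda>_::nat. ZM)(0:=x, 1:=u, 2:=v, 3:=u')) (AInf 4 psiB)"
    by (rule af_inf_inst[OF okM e3 _ h3 c(4)]) (simp add: sdefs)
  have h5: "0 \<le> af_eval M ((\<lambda>_::nat. ZM)(0:=x, 1:=u, 2:=v, 3:=u', 4:=v')) psiB"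
    by (rule af_inf_inst[OF okM e4 _ h4 c(5)]) (simp add: sdefs)
  then show ?thesis by (simp add: psiB_def)
qed

lemma M_C:
  assumes c: "x \<in> CM" "y \<in> CM" and nx: "normal M x" and ep: "0 < \<epsilon>"
  shows "\<exists>u\<in>CM. \<exists>v\<in>CM. D y (P x u v) + Lm v x < \<epsilon>"
proof -
  define e1 where "e1 = (\<lambda>_::nat. ZM)(0:=x, 1:=y)"
  have e0: "\<forall>n. ((\<lambda>_::nat. ZM)(0:=x)) n \<in> CM" by (rule env_in[OF env0 c(1)])
  have ee: "\<forall>n. e1 n \<in> CM" unfolding e1_def by (rule env_in[OF e0 c(2)])
  have h1: "0 \<le> af_eval M ((\<lambda>_::nat. ZM)(0:=x)) (AInf 1 psiC)"
    by (rule af_inf_inst[OF okM env0 _ hC[unfolded sentC_def] c(1)]) (simp add: sdefs)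
  have h2: "0 \<le> af_eval M e1 psiC" unfolding e1_def
    by (rule af_inf_inst[OF okM e0 _ h1 c(2)]) (simp add: sdefs)
  have "af_eval M e1 psiC = 2 * (1 + - 1 * D (e1 0) ZM) + - 1 * af_eval M e1 (AInf 2 (AInf 3 Ec))"
    unfolding psiC_def af_eval.simps(1) af_eval.simps(2) af_eval.simps(3) af_eval.simps(4) tm_eval.simps(1) tm_eval.simps(7) ..
  moreover have "e1 0 = x" by (simp add: e1_def)
  moreover have "D x ZM = 1" using nx by (simp add: normal_def)
  ultimately have "af_eval M e1 (AInf 2 (AInf 3 Ec)) < \<epsilon>" using h2 ep by simp
  then obtain u where u: "u \<in> CM" "af_eval M (e1(2:=u)) (AInf 3 Ec) < \<epsilon>" using af_inf_lt[OF CMne] by blast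
  then obtain v where v: "v \<in> CM" "af_eval M (e1(2:=u, 3:=v)) Ec < \<epsilon>" using af_inf_lt[OF CMne] by blast
  then show ?thesis using u by (auto simp: Ec_def Lt_def e1_def)
qed


lemma LmM: "v \<in> CM \<Longrightarrow> x \<in> CM \<Longrightarrow> 0 \<le> Lm v x"
  using dpos meetM SM by blast

lemma stab:
  assumes c: "x \<in> CM" "y \<in> CM" "u \<in> CM" "v \<in> CM" "u' \<in> CM" "v' \<in> CM" and nx: "normal M x"
  shows "D u u' \<le> (D y (P x u v) + Lm v x) + (D y (P x u' v') + Lm v' x)"
    and "D v v' \<le> 2 * ((D y (P x u v) + Lm v x) + (D y (P x u' v') + Lm v' x))"
proof -
  have n1: "D x ZM = 1" using nx by (simp add: normal_def)
  have t: "D (P x u v) (P x u' v') \<le> D y (P x u v) + D y (P x u' v')"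
    using tri[of "P x u v" y "P x u' v'"] dsym[of y "P x u v"] c PM by auto
  have a: "D u u' \<le> D (P x u v) (P x u' v') + Lm v x + Lm v' x"
    using M_A[OF c(1,3,4,5,6)] n1 by simp
  show 1: "D u u' \<le> (D y (P x u v) + Lm v x) + (D y (P x u' v') + Lm v' x)"
    using a t by linarith
  have "D v v' \<le> D u u' + D (P x u v) (P x u' v')" by (rule M_B[OF c(1,3,4,5,6)])
  then show "D v v' \<le> 2 * ((D y (P x u v) + Lm v x) + (D y (P x u' v') + Lm v' x))"
    using 1 t LmM c by (smt (verit))
qed

lemma cont:
  assumes c: "x \<in> CM" "y \<in> CM" "u \<in> CM" "v \<in> CM" "u' \<in> CM" "v' \<in> CM"
  shows "D y (P x u' v') + Lm v' x \<le> (D y (P x u v) + Lm v x) + D u u' + 3 * D v v'"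
proof -
  have m1: "Mmul M x u \<in> CM" "Mmul M x u' \<in> CM" using c mulM by auto
  have p1: "D (P x u v) (P x u' v) \<le> D (Mmul M x u) (Mmul M x u')"
    using lipD(2)[OF ladd m1 c(4)] .
  have p2: "D (Mmul M x u) (Mmul M x u') \<le> D u u'" using lipD(3)[OF lmul c(3,5,1)] .
  have p3: "D (P x u' v) (P x u' v') \<le> D v v'" using lipD(3)[OF ladd c(4,6) m1(2)] .
  have p4: "D (P x u v) (P x u' v') \<le> D (P x u v) (P x u' v) + D (P x u' v) (P x u' v')"
    by (rule tri) (use PM c in auto)
  have p5: "D y (P x u' v') \<le> D y (P x u v) + D (P x u v) (P x u' v')"
    by (rule tri) (use PM c in auto)
  have s1: "Sx v \<in> CM" "Sx v' \<in> CM" using SM c by auto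
  have mm1: "Mmeet M (Sx v) x \<in> CM" "Mmeet M (Sx v') x \<in> CM" using meetM s1 c by auto
  have q1: "D (Sx v') (Sx v) \<le> D v' v" using lipD(2)[OF ladd c(6,4) oM] .
  have q2: "D (Mmeet M (Sx v') x) (Mmeet M (Sx v) x) \<le> D (Sx v') (Sx v)"
    using lipD(2)[OF lmeet s1(2,1) c(1)] .
  have q3: "Lm v' x \<le> D (Mmeet M (Sx v') x) (Mmeet M (Sx v) x) + D (Mmeet M (Sx v) x) (Sx v')"
    by (rule tri) (use mm1 s1 in auto)
  have q4: "D (Mmeet M (Sx v) x) (Sx v') \<le> Lm v x + D (Sx v) (Sx v')"
    by (rule tri) (use mm1 s1 in auto)
  have sy: "D v' v = D v v'" "D (Sx v) (Sx v') = D (Sx v') (Sx v)" using dsym c s1 by auto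
  show ?thesis using p1 p2 p3 p4 p5 q1 q2 q3 q4 sy by linarith
qed

lemma small:
  assumes "0 < (e::real)"
  shows "\<exists>N. \<forall>n\<ge>N. 1 / real (Suc n) < e"
proof -
  obtain N :: nat where N: "1 / e < real N" using reals_Archimedean2 by blast
  have "1 / real (Suc n) < e" if "n \<ge> N" for n
  proof -
    have "1 / e < real (Suc n)" using N that by linarith
    then have "1 < e * real (Suc n)" using assms by (simp add: field_simps)
    then show ?thesis using assms by (simp add: field_simps)
  qed
  then show ?thesis by blast
qed

lemma exist:
  assumes c: "x \<in> CM" "y \<in> CM" and nx: "normal M x"
  shows "\<exists>u\<in>CM. \<exists>v\<in>CM. divrem M x y u v"
proof -
  define E where "E u v = D y (P x u v) + Lm v x" for u v
  have "\<forall>n. \<exists>p. fst p \<in> CM \<and> snd p \<in> CM \<and> E (fst p) (snd p) < 1 / real (Suc n)"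
  proof
    fix n
    obtain u v where "u \<in> CM" "v \<in> CM" "E u v < 1 / real (Suc n)"
      using M_C[OF c nx, of "1 / real (Suc n)"] unfolding E_def by auto
    then show "\<exists>p. fst p \<in> CM \<and> snd p \<in> CM \<and> E (fst p) (snd p) < 1 / real (Suc n)"
      by (intro exI[of _ "(u, v)"]) simp
  qed
  then obtain pp where pp: "\<forall>n. fst (pp n) \<in> CM \<and> snd (pp n) \<in> CM \<and> E (fst (pp n)) (snd (pp n)) < 1 / real (Suc n)"
    using choice[of "\<lambda>n p. fst p \<in> CM \<and> snd p \<in> CM \<and> E (fst p) (snd p) < 1 / real (Suc n)"] by blast
  define U where "U n = fst (pp n)" for n
  define V where "V n = snd (pp n)" for n
  have UV: "\<And>n. U n \<in> CM" "\<And>n. V n \<in> CM" "\<And>n. E (U n) (V n) < 1 / real (Suc n)"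
    using pp unfolding U_def V_def by auto
  have Epos: "\<And>n. 0 \<le> E (U n) (V n)" unfolding E_def using UV c dpos PM LmM by (meson add_nonneg_nonneg)
  have dU: "D (U m) (U n) \<le> 2 * (1 / real (Suc m)) + 2 * (1 / real (Suc n))" for m n
    using stab(1)[OF c UV(1)[of m] UV(2)[of m] UV(1)[of n] UV(2)[of n] nx] UV(3)[of m] UV(3)[of n] unfolding E_def
    by (smt (verit) divide_pos_pos of_nat_0_less_iff zero_less_Suc)
  have dV: "D (V m) (V n) \<le> 2 * (1 / real (Suc m)) + 2 * (1 / real (Suc n))" for m n
    using stab(2)[OF c UV(1)[of m] UV(2)[of m] UV(1)[of n] UV(2)[of n] nx] UV(3)[of m] UV(3)[of n] unfolding E_def
    by (smt (verit) divide_pos_pos of_nat_0_less_iff zero_less_Suc)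
  have cauchy: "\<forall>e>0. \<exists>N. \<forall>m\<ge>N. \<forall>n\<ge>N. D (s m) (s n) < e"
    if "\<And>m n. D (s m) (s n) \<le> 2 * (1 / real (Suc m)) + 2 * (1 / real (Suc n))" for s :: "nat \<Rightarrow> 'a"
  proof (intro allI impI)
    fix e :: real assume "0 < e"
    then obtain N where N: "\<forall>n\<ge>N. 1 / real (Suc n) < e / 4" using small[of "e/4"] by auto
    have "\<forall>m\<ge>N. \<forall>n\<ge>N. D (s m) (s n) < e"
    proof (intro allI impI)
      fix m n assume "m \<ge> N" "n \<ge> N"
      then have "1 / real (Suc m) < e / 4" "1 / real (Suc n) < e / 4" using N by auto
      then show "D (s m) (s n) < e" using that[of m n] by linarith
    qed
    then show "\<exists>N. \<forall>m\<ge>N. \<forall>n\<ge>N. D (s m) (s n) < e" by blast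
  qed
  obtain ul where ul: "ul \<in> CM" "\<forall>e>0. \<exists>N. \<forall>n\<ge>N. D (U n) ul < e"
    using compl[of U] UV(1) cauchy[of U] dU by blast
  obtain vl where vl: "vl \<in> CM" "\<forall>e>0. \<exists>N. \<forall>n\<ge>N. D (V n) vl < e"
    using compl[of V] UV(2) cauchy[of V] dV by blast
  have Eb: "E ul vl \<le> E (U n) (V n) + D (U n) ul + 3 * D (V n) vl" for n
    unfolding E_def using cont[OF c UV(1) UV(2) ul(1) vl(1)] .
  have "E ul vl \<le> 0"
  proof (rule field_le_epsilon)
    fix e :: real assume e: "0 < e"
    obtain N1 where N1: "\<forall>n\<ge>N1. D (U n) ul < e / 5" using ul(2) e by (meson zero_less_divide_iff zero_less_numeral)
    obtain N2 where N2: "\<forall>n\<ge>N2. D (V n) vl < e / 5" using vl(2) e by (meson zero_less_divide_iff zero_less_numeral)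
    obtain N3 where N3: "\<forall>n\<ge>N3. 1 / real (Suc n) < e / 5" using small[of "e/5"] e by auto
    define n where "n = max N1 (max N2 N3)"
    have "D (U n) ul < e / 5" "D (V n) vl < e / 5" "1 / real (Suc n) < e / 5"
      using N1 N2 N3 unfolding n_def by auto
    then show "E ul vl \<le> 0 + e" using Eb[of n] UV(3)[of n] by linarith
  qed
  moreover have "0 \<le> D y (P x ul vl)" "0 \<le> Lm vl x" using dpos c ul vl PM LmM by auto
  ultimately have z1: "D y (P x ul vl) = 0" and z2: "Lm vl x = 0" unfolding E_def by linarith+
  have pm: "P x ul vl \<in> CM" using PM[OF c(1) ul(1) vl(1)] .
  have sm: "Sx vl \<in> CM" using SM[OF vl(1)] .
  have mm: "Mmeet M (Sx vl) x \<in> CM" using meetM[OF sm c(1)] .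
  have "y = P x ul vl" using d0[OF c(2) pm] z1 by simp
  moreover have "Mmeet M (Sx vl) x = Sx vl" using d0[OF mm sm] z2 by simp
  ultimately show ?thesis using ul vl unfolding divrem_def leq_def by blast
qed


definition coreE :: "'b af" where
  "coreE = AAdd (ADist (V 1) (Plus (Times (V 0) (V 3)) (V 4))) (ADist (Meet (Plus (V 4) One) (V 0)) (Plus (V 4) One))"

lemma E0:
  assumes c: "x \<in> CM" "y \<in> CM" "a \<in> CM" "b \<in> CM" and d: "divrem M x y a b"
  shows "D y (P x a b) + Lm b x = 0"
proof -
  have "y = P x a b" "Mmeet M (Sx b) x = Sx b" using d unfolding divrem_def leq_def by auto
  then show ?thesis using drefl c SM by simp
qed

lemma defin:
  assumes H: "\<forall>x\<in>CM. \<forall>y\<in>CM. normal M x \<longrightarrow> f x y \<in> CM \<and> g x y \<in> CM \<and> divrem M x y (f x y) (g x y)"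
  shows "definable_E M f" "definable_E M g"
proof -
  define \<rho> where "\<rho> x y z = (\<lambda>n::nat. if n = 0 then x else if n = 1 then y else z)" for x y z :: 'a
  have \<rho>in: "\<forall>n. \<rho> x y z n \<in> CM" if "x \<in> CM" "y \<in> CM" "z \<in> CM" for x y z
    using that unfolding \<rho>_def by auto
  have evc: "af_eval M ((\<rho> x y z)(3:=u, 4:=v)) coreE = D y (P x u v) + Lm v x" for x y z u v
    by (simp add: coreE_def \<rho>_def)
  have sc: "set_af coreE \<subseteq> CM" "fv_af coreE \<subseteq> {0,1,2,3,4}" by (auto simp: coreE_def)
  have cpos: "0 \<le> D y (P x u v) + Lm v x" if "x \<in> CM" "y \<in> CM" "u \<in> CM" "v \<in> CM" for x y u v
    using dpos[OF that(2) PM[OF that(1,3,4)]] LmM[OF that(4,1)] by linarith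
  show "definable_E M f"
    unfolding definable_E_def
  proof (intro allI impI exI conjI)
    fix \<epsilon> :: real assume "0 < \<epsilon>"
    let ?\<phi> = "AInf 3 (AInf 4 (AAdd (ADist (V 3) (V 2)) coreE))"
    show "fv_af ?\<phi> \<subseteq> {0, 1, 2}" using sc by auto
    show "set_af ?\<phi> \<subseteq> CM" using sc by auto
    show "\<forall>x\<in>CM. \<forall>y\<in>CM. \<forall>z\<in>CM. normal M x \<longrightarrow>
           \<bar>D (f x y) z - af_eval M (\<lambda>n. if n = 0 then x else if n = 1 then y else z) ?\<phi>\<bar> \<le> \<epsilon>"
    proof (intro ballI impI)
      fix x y z assume c: "x \<in> CM" "y \<in> CM" "z \<in> CM" and nx: "normal M x"
      have fg: "f x y \<in> CM" "g x y \<in> CM" "divrem M x y (f x y) (g x y)" using H c nx by auto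
      have e0: "D y (P x (f x y) (g x y)) + Lm (g x y) x = 0" by (rule E0[OF c(1,2) fg])
      have ev: "af_eval M ((\<rho> x y z)(3:=u, 4:=v)) (AAdd (ADist (V 3) (V 2)) coreE) = D u z + (D y (P x u v) + Lm v x)" for u v
        using evc[of x y z u v] by (simp add: \<rho>_def)
      have lo: "D (f x y) z \<le> af_eval M (\<rho> x y z) ?\<phi>"
      proof (intro af_inf_intro CMne)
        fix u v assume u: "u \<in> CM" and v: "v \<in> CM"
        have "D u (f x y) \<le> (D y (P x u v) + Lm v x) + (D y (P x (f x y) (g x y)) + Lm (g x y) x)"
          by (rule stab(1)[OF c(1,2) u v fg(1,2) nx])
        moreover have "D (f x y) z \<le> D (f x y) u + D u z" by (rule tri[OF fg(1) u c(3)])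
        moreover have "D (f x y) u = D u (f x y)" using dsym fg u by blast
        ultimately have "D (f x y) z \<le> D u z + (D y (P x u v) + Lm v x)" using e0 by linarith
        then show "D (f x y) z \<le> af_eval M (((\<rho> x y z)(3 := u))(4 := v)) (AAdd (ADist (V 3) (V 2)) coreE)"
          using ev by simp
      qed
      have e1: "\<forall>n. ((\<rho> x y z)(3:=f x y)) n \<in> CM" using \<rho>in[OF c] fg by auto
      have "af_eval M (\<rho> x y z) ?\<phi> \<le> af_eval M ((\<rho> x y z)(3:=f x y)) (AInf 4 (AAdd (ADist (V 3) (V 2)) coreE))"
        by (rule af_inf_le[OF okM \<rho>in[OF c]]) (use sc fg in auto)
      also have "\<dots> \<le> af_eval M ((\<rho> x y z)(3:=f x y, 4:=g x y)) (AAdd (ADist (V 3) (V 2)) coreE)"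
        by (rule af_inf_le[OF okM e1]) (use sc fg in auto)
      also have "\<dots> = D (f x y) z" using ev[of "f x y" "g x y"] e0 by simp
      finally have hi: "af_eval M (\<rho> x y z) ?\<phi> \<le> D (f x y) z" .
      have "af_eval M (\<lambda>n. if n = 0 then x else if n = 1 then y else z) ?\<phi> = D (f x y) z"
        using lo hi unfolding \<rho>_def by linarith
      then show "\<bar>D (f x y) z - af_eval M (\<lambda>n. if n = 0 then x else if n = 1 then y else z) ?\<phi>\<bar> \<le> \<epsilon>"
        using \<open>0 < \<epsilon>\<close> by simp
    qed
  qed
  show "definable_E M g"
    unfolding definable_E_def
  proof (intro allI impI exI conjI)
    fix \<epsilon> :: real assume "0 < \<epsilon>"
    let ?\<phi> = "AInf 3 (AInf 4 (AAdd (ADist (V 4) (V 2)) (AScal 2 coreE)))"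
    show "fv_af ?\<phi> \<subseteq> {0, 1, 2}" using sc by auto
    show "set_af ?\<phi> \<subseteq> CM" using sc by auto
    show "\<forall>x\<in>CM. \<forall>y\<in>CM. \<forall>z\<in>CM. normal M x \<longrightarrow>
           \<bar>D (g x y) z - af_eval M (\<lambda>n. if n = 0 then x else if n = 1 then y else z) ?\<phi>\<bar> \<le> \<epsilon>"
    proof (intro ballI impI)
      fix x y z assume c: "x \<in> CM" "y \<in> CM" "z \<in> CM" and nx: "normal M x"
      have fg: "f x y \<in> CM" "g x y \<in> CM" "divrem M x y (f x y) (g x y)" using H c nx by auto
      have e0: "D y (P x (f x y) (g x y)) + Lm (g x y) x = 0" by (rule E0[OF c(1,2) fg])
      have ev: "af_eval M ((\<rho> x y z)(3:=u, 4:=v)) (AAdd (ADist (V 4) (V 2)) (AScal 2 coreE)) = D v z + 2 * (D y (P x u v) + Lm v x)" for u v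
        using evc[of x y z u v] by (simp add: \<rho>_def)
      have lo: "D (g x y) z \<le> af_eval M (\<rho> x y z) ?\<phi>"
      proof (intro af_inf_intro CMne)
        fix u v assume u: "u \<in> CM" and v: "v \<in> CM"
        have "D v (g x y) \<le> 2 * ((D y (P x u v) + Lm v x) + (D y (P x (f x y) (g x y)) + Lm (g x y) x))"
          by (rule stab(2)[OF c(1,2) u v fg(1,2) nx])
        moreover have "D (g x y) z \<le> D (g x y) v + D v z" by (rule tri[OF fg(2) v c(3)])
        moreover have "D (g x y) v = D v (g x y)" using dsym fg v by blast
        ultimately have "D (g x y) z \<le> D v z + 2 * (D y (P x u v) + Lm v x)" using e0 unfolding distrib_left by linarith
        then show "D (g x y) z \<le> af_eval M (((\<rho> x y z)(3 := u))(4 := v)) (AAdd (ADist (V 4) (V 2)) (AScal 2 coreE))"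
          using ev by simp
      qed
      have e1: "\<forall>n. ((\<rho> x y z)(3:=f x y)) n \<in> CM" using \<rho>in[OF c] fg by auto
      have "af_eval M (\<rho> x y z) ?\<phi> \<le> af_eval M ((\<rho> x y z)(3:=f x y)) (AInf 4 (AAdd (ADist (V 4) (V 2)) (AScal 2 coreE)))"
        by (rule af_inf_le[OF okM \<rho>in[OF c]]) (use sc fg in auto)
      also have "\<dots> \<le> af_eval M ((\<rho> x y z)(3:=f x y, 4:=g x y)) (AAdd (ADist (V 4) (V 2)) (AScal 2 coreE))"
        by (rule af_inf_le[OF okM e1]) (use sc fg in auto)
      also have "\<dots> = D (g x y) z" using ev[of "f x y" "g x y"] e0 by simp
      finally have hi: "af_eval M (\<rho> x y z) ?\<phi> \<le> D (g x y) z" .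
      have "af_eval M (\<lambda>n. if n = 0 then x else if n = 1 then y else z) ?\<phi> = D (g x y) z"
        using lo hi unfolding \<rho>_def by linarith
      then show "\<bar>D (g x y) z - af_eval M (\<lambda>n. if n = 0 then x else if n = 1 then y else z) ?\<phi>\<bar> \<le> \<epsilon>"
        using \<open>0 < \<epsilon>\<close> by simp
    qed
  qed
qed

lemma uniq:
  assumes c: "x \<in> CM" "y \<in> CM" "u \<in> CM" "v \<in> CM" "u' \<in> CM" "v' \<in> CM" and nx: "normal M x"
    and d: "divrem M x y u v" "divrem M x y u' v'"
  shows "u = u' \<and> v = v'"
proof -
  have a: "D y (P x u v) + Lm v x = 0" by (rule E0[OF c(1,2,3,4) d(1)])
  have b: "D y (P x u' v') + Lm v' x = 0" by (rule E0[OF c(1,2,5,6) d(2)])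
  have "D u u' \<le> 0" using stab(1)[OF c nx] a b by linarith
  then have "u = u'" using d0[OF c(3,5)] dpos[OF c(3,5)] by linarith
  moreover have "D v v' \<le> 0" using stab(2)[OF c nx] a b by simp
  then have "v = v'" using d0[OF c(4,6)] dpos[OF c(4,6)] by linarith
  ultimately show ?thesis by blast
qed

end

theorem mainTheorem9:
  fixes M :: "'a lstr"
  assumes "is_Lstr M" and "models_AA M" and "ext_aleph0_saturated M"
  shows "(\<forall>x\<in>Mcar M. \<forall>y\<in>Mcar M. normal M x \<longrightarrow>
            (\<forall>u\<in>Mcar M. \<forall>v\<in>Mcar M. \<forall>u'\<in>Mcar M. \<forall>v'\<in>Mcar M.
               divrem M x y u v \<and> divrem M x y u' v' \<longrightarrow> u = u' \<and> v = v'))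
       \<and> (\<exists>f g. \<forall>x\<in>Mcar M. \<forall>y\<in>Mcar M. normal M x \<longrightarrow>
               f x y \<in> Mcar M \<and> g x y \<in> Mcar M \<and> divrem M x y (f x y) (g x y))
       \<and> (\<forall>f g. (\<forall>x\<in>Mcar M. \<forall>y\<in>Mcar M. normal M x \<longrightarrow>
               f x y \<in> Mcar M \<and> g x y \<in> Mcar M \<and> divrem M x y (f x y) (g x y))
            \<longrightarrow> definable_E M f \<and> definable_E M g)"
proof -
  interpret mm M using assms(1,2) by (rule mm.intro)
  have P1: "\<forall>x\<in>Mcar M. \<forall>y\<in>Mcar M. normal M x \<longrightarrow>
            (\<forall>u\<in>Mcar M. \<forall>v\<in>Mcar M. \<forall>u'\<in>Mcar M. \<forall>v'\<in>Mcar M.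
               divrem M x y u v \<and> divrem M x y u' v' \<longrightarrow> u = u' \<and> v = v')"
  proof (intro ballI impI)
    fix x y u v u' v' assume c: "x \<in> Mcar M" "y \<in> Mcar M" "normal M x" "u \<in> Mcar M" "v \<in> Mcar M"
      "u' \<in> Mcar M" "v' \<in> Mcar M" and d: "divrem M x y u v \<and> divrem M x y u' v'"
    show "u = u' \<and> v = v'" using uniq[OF c(1,2,4,5,6,7,3) conjunct1[OF d] conjunct2[OF d]] .
  qed
  define F where "F x y = (SOME p. fst p \<in> Mcar M \<and> snd p \<in> Mcar M \<and> divrem M x y (fst p) (snd p))" for x y
  have FF: "fst (F x y) \<in> Mcar M \<and> snd (F x y) \<in> Mcar M \<and> divrem M x y (fst (F x y)) (snd (F x y))"
    if xy: "x \<in> Mcar M" "y \<in> Mcar M" "normal M x" for x y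
  proof -
    obtain u v where "u \<in> Mcar M" "v \<in> Mcar M" "divrem M x y u v" using exist[OF xy] by blast
    then have "\<exists>p. fst p \<in> Mcar M \<and> snd p \<in> Mcar M \<and> divrem M x y (fst p) (snd p)"
      by (intro exI[of _ "(u, v)"]) simp
    then show ?thesis unfolding F_def by (rule someI_ex)
  qed
  have P2: "\<exists>f g. \<forall>x\<in>Mcar M. \<forall>y\<in>Mcar M. normal M x \<longrightarrow>
               f x y \<in> Mcar M \<and> g x y \<in> Mcar M \<and> divrem M x y (f x y) (g x y)"
    apply (rule exI[of _ "\<lambda>x y. fst (F x y)"], rule exI[of _ "\<lambda>x y. snd (F x y)"])
    apply (intro ballI impI)
    subgoal for x y using FF[of x y] by simp
    done
  have P3: "\<forall>f g. (\<forall>x\<in>Mcar M. \<forall>y\<in>Mcar M. normal M x \<longrightarrow>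
               f x y \<in> Mcar M \<and> g x y \<in> Mcar M \<and> divrem M x y (f x y) (g x y))
            \<longrightarrow> definable_E M f \<and> definable_E M g"
  proof (intro allI impI)
    fix f g assume h: "\<forall>x\<in>Mcar M. \<forall>y\<in>Mcar M. normal M x \<longrightarrow>
               f x y \<in> Mcar M \<and> g x y \<in> Mcar M \<and> divrem M x y (f x y) (g x y)"
    show "definable_E M f \<and> definable_E M g" using defin[OF h] by (rule conjI)
  qed
  show ?thesis using P1 P2 P3 by (intro conjI)
qed


end
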